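(* Let the columns of $K_1 = [ Y_1^\top \ X_1^\top ]^\top$, with $Y_1$ square and nonsingular, solve the generalized eigenvalue problem $M_1K_1 = M_2^\top K_1 \Lambda$. Then $L_1 = X_1Y_1^{-1}$ solves \[ A_2^\top L_1+B_2^\top = (B_1 +D_1L_1)(A_1 + B_1^\top L_1)^{-1}(D_2^\top + B_2L_1). \]
   Context: Two-player quadratic game with cost blocks $A_i\succ 0$, $B_i\in\mathbb{R}^{d_{-i}\times d_i}$, $D_i$ for player $i$ (cost $f_i=\tfrac12[x_i;x_{-i}]^\top\begin{bmatrix}A_i & B_i^\top\\ B_i& D_i\end{bmatrix}[x_i;x_{-i}]+a_i^\top x_i+b_i^\top x_{-i}$). $M_1=\begin{bmatrix}A_1 & B_1^\top\\ B_1 & D_1\end{bmatrix}$, $M_2=\begin{bmatrix}D_2 & B_2\\ B_2^\top & A_2\end{bmatrix}$ are invertible, $K_1\in\mathbb{C}^{d\times d_1}$, $Y_1\in\mathbb{C}^{d_1\times d_1}$, $X_1\in\mathbb{C}^{d_2\times d_1}$. The displayed equation is the rearranged fixed-point condition of player 1's composite conjecture update $L_1^+ = -\big(A_{2}^\top - (B_1 +D_1L_1)(A_1 + B_1^\top L_1)^{-1} B_{2}\big)^{-1}\big(B_{2}^\top - (B_1 +D_1L_1)(A_1 + B_1^\top L_1)^{-1} D_{2}^\top\big)$. *)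

theory Defs
  imports "Jordan_Normal_Form.Matrix"
begin

definition cmat :: "real mat \<Rightarrow> complex mat" where
  "cmat A = map_mat complex_of_real A"

definition pos_def_mat :: "nat \<Rightarrow> real mat \<Rightarrow> bool" where
  "pos_def_mat n A \<longleftrightarrow> A \<in> carrier_mat n n \<and> transpose_mat A = A \<and>
     (\<forall>x \<in> carrier_vec n. x \<noteq> 0\<^sub>v n \<longrightarrow> x \<bullet> (A *\<^sub>v x) > 0)"

end

theory Submission
  imports Defs "Jordan_Normal_Form.Determinant"
begin

lemma gen:
  fixes A B C D X Y Yi \<Lambda> :: "'a::field mat"
  assumes A: "A \<in> carrier_mat r n" and B: "B \<in> carrier_mat r m"
   and C: "C \<in> carrier_mat r n" and D: "D \<in> carrier_mat r m"
   and X: "X \<in> carrier_mat m n" and Y: "Y \<in> carrier_mat n n" and Yi: "Yi \<in> carrier_mat n n"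
   and L: "\<Lambda> \<in> carrier_mat n n"
   and YYi: "Y * Yi = 1\<^sub>m n" and YiY: "Yi * Y = 1\<^sub>m n"
   and E: "A * Y + B * X = (C * Y + D * X) * \<Lambda>"
  shows "A + B * (X * Yi) = (C + D * (X * Yi)) * (Y * \<Lambda> * Yi)"
proof -
  have "(A * Y + B * X) * Yi = A * Y * Yi + B * X * Yi"
    using A B X Y Yi by (intro add_mult_distrib_mat[of _ r n]) auto
  also have "A * Y * Yi = A" using A Y Yi YYi by (simp add: assoc_mult_mat[of _ r n _ n _ n])
  also have "B * X * Yi = B * (X * Yi)" using B X Yi by (simp add: assoc_mult_mat[of _ r m _ n _ n])
  finally have "A + B * (X * Yi) = (A * Y + B * X) * Yi" by simp
  also have "\<dots> = (C * Y + D * X) * \<Lambda> * Yi" using E by simp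
  also have "\<dots> = (C + D * (X * Yi)) * (Y * \<Lambda> * Yi)"
  proof -
    have yy: "Yi * (Y * (\<Lambda> * Yi)) = \<Lambda> * Yi"
      using Y Yi L YiY by (simp add: assoc_mult_mat[of Yi n n Y n "\<Lambda> * Yi" n, symmetric])
    have "D * (X * Yi) * (Y * \<Lambda> * Yi) = D * X * \<Lambda> * Yi"
      using D X Y Yi L YiY yy by (simp add: assoc_mult_mat[of _ r m _ n _ n] assoc_mult_mat[of _ m n _ n _ n] assoc_mult_mat[of _ n n _ n _ n])
    moreover have "C * (Y * \<Lambda> * Yi) = C * Y * \<Lambda> * Yi"
      using C Y Yi L by (simp add: assoc_mult_mat[of _ r n _ n _ n] assoc_mult_mat[of _ n n _ n _ n])
    moreover have "(C + D * (X * Yi)) * (Y * \<Lambda> * Yi) = C * (Y * \<Lambda> * Yi) + D * (X * Yi) * (Y * \<Lambda> * Yi)"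
      using C D X Y Yi L by (intro add_mult_distrib_mat[of _ r n]) auto
    moreover have "(C * Y + D * X) * \<Lambda> * Yi = C * Y * \<Lambda> * Yi + D * X * \<Lambda> * Yi"
      using C D X Y Yi L by (subst add_mult_distrib_mat[of _ r n], auto intro!: add_mult_distrib_mat[of _ r n])
    ultimately show ?thesis by simp
  qed
  finally show ?thesis .
qed

lemma block_mult:
  assumes A: "A \<in> carrier_mat n1 m1" and B: "B \<in> carrier_mat n1 m2"
   and C: "C \<in> carrier_mat n2 m1" and D: "D \<in> carrier_mat n2 m2"
   and Y: "Y \<in> carrier_mat m1 k" and X: "(X :: 'a :: comm_ring_1 mat) \<in> carrier_mat m2 k"
  shows "four_block_mat A B C D * (Y @\<^sub>r X) = (A * Y + B * X) @\<^sub>r (C * Y + D * X)"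
proof -
  have "four_block_mat A B C D * (Y @\<^sub>r X) = four_block_mat A B C D * four_block_mat Y (0\<^sub>m m1 0) X (0\<^sub>m m2 0)"
    using X Y by (simp add: append_rows_def)
  also have "\<dots> = four_block_mat (A * Y + B * X) (A * 0\<^sub>m m1 0 + B * 0\<^sub>m m2 0) (C * Y + D * X) (C * 0\<^sub>m m1 0 + D * 0\<^sub>m m2 0)"
    by (rule mult_four_block_mat[OF A B C D Y _ X], auto)
  also have "\<dots> = (A * Y + B * X) @\<^sub>r (C * Y + D * X)"
    using A B C D X Y by (simp add: append_rows_def)
  finally show ?thesis .
qed

lemma append_rows_mult:
  assumes P: "P \<in> carrier_mat n1 k" and Q: "Q \<in> carrier_mat n2 k" and L: "(L :: 'a :: comm_ring_1 mat) \<in> carrier_mat k j"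
  shows "(P @\<^sub>r Q) * L = (P * L) @\<^sub>r (Q * L)"
proof -
  have r1: "row (P @\<^sub>r Q) i = row P i" if "i < n1" for i
    using that P Q by (intro eq_vecI, auto simp: append_rows_def)
  have r2: "row (P @\<^sub>r Q) i = row Q (i - n1)" if "\<not> i < n1" "i < n1 + n2" for i
    using that P Q by (intro eq_vecI, auto simp: append_rows_def)
  have c1: "(P @\<^sub>r Q) * L \<in> carrier_mat (n1 + n2) j" using P Q L by (intro mult_carrier_mat[of _ _ k]) auto
  have c2: "(P * L) @\<^sub>r (Q * L) \<in> carrier_mat (n1 + n2) j" using P Q L by auto
  have e: "((P * L) @\<^sub>r (Q * L)) $$ (i, jj) = (if i < n1 then (P * L) $$ (i, jj) else (Q * L) $$ (i - n1, jj))"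
    if "i < n1 + n2" "jj < j" for i jj
    using that P Q L by (simp add: append_rows_def)
  show ?thesis
  proof (rule eq_matI)
    fix i jj assume i: "i < dim_row ((P * L) @\<^sub>r (Q * L))" and jj: "jj < dim_col ((P * L) @\<^sub>r (Q * L))"
    then have i': "i < n1 + n2" and jj': "jj < j" using c2 by auto
    show "((P @\<^sub>r Q) * L) $$ (i, jj) = ((P * L) @\<^sub>r (Q * L)) $$ (i, jj)"
    proof (cases "i < n1")
      case True
      have "((P @\<^sub>r Q) * L) $$ (i, jj) = row (P @\<^sub>r Q) i \<bullet> col L jj"
        using i' jj' P Q L by (simp add: append_rows_def)
      also have "\<dots> = row P i \<bullet> col L jj" using r1[OF True] by simp
      also have "\<dots> = (P * L) $$ (i, jj)" using True jj' P L by simp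
      finally show ?thesis using e[OF i' jj'] True by simp
    next
      case False
      have "((P @\<^sub>r Q) * L) $$ (i, jj) = row (P @\<^sub>r Q) i \<bullet> col L jj"
        using i' jj' P Q L by (simp add: append_rows_def)
      also have "\<dots> = row Q (i - n1) \<bullet> col L jj" using r2[OF False i'] by simp
      also have "\<dots> = (Q * L) $$ (i - n1, jj)" using False i' jj' Q L by simp
      finally show ?thesis using e[OF i' jj'] False by simp
    qed
  qed (use c1 c2 in auto)
qed

lemma append_rows_inj:
  assumes P: "P \<in> carrier_mat n1 k" and P': "P' \<in> carrier_mat n1 k"
    and Q: "Q \<in> carrier_mat n2 k" and Q': "Q' \<in> carrier_mat n2 k"
    and E: "P @\<^sub>r Q = P' @\<^sub>r Q'"
  shows "P = P' \<and> Q = Q'"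
proof
  show "P = P'"
  proof (rule eq_matI)
    fix i j assume "i < dim_row P'" "j < dim_col P'"
    then have "P $$ (i, j) = (P @\<^sub>r Q) $$ (i, j)" "P' $$ (i, j) = (P' @\<^sub>r Q') $$ (i, j)"
      using P P' Q Q' by (auto simp: append_rows_def)
    then show "P $$ (i, j) = P' $$ (i, j)" using E by simp
  qed (use P P' in auto)
  show "Q = Q'"
  proof (rule eq_matI)
    fix i j assume "i < dim_row Q'" "j < dim_col Q'"
    then have "Q $$ (i, j) = (P @\<^sub>r Q) $$ (n1 + i, j)" "Q' $$ (i, j) = (P' @\<^sub>r Q') $$ (n1 + i, j)"
      using P P' Q Q' by (auto simp: append_rows_def)
    then show "Q $$ (i, j) = Q' $$ (i, j)" using E by simp
  qed (use Q Q' in auto)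
qed

theorem proposition3:
  fixes d1 d2 :: nat
    and A1 D2 :: "real mat" and A2 D1 :: "real mat" and B1 B2 :: "real mat"
    and Y1 Y1inv W :: "complex mat" and X1 :: "complex mat" and \<Lambda> :: "complex mat"
  assumes A1: "pos_def_mat d1 A1" and A2: "pos_def_mat d2 A2"
    and B1: "B1 \<in> carrier_mat d2 d1" and B2: "B2 \<in> carrier_mat d1 d2"
    and D1: "D1 \<in> carrier_mat d2 d2" and D2: "D2 \<in> carrier_mat d1 d1"
    and M1_inv: "invertible_mat (four_block_mat A1 (transpose_mat B1) B1 D1)"
    and M2_inv: "invertible_mat (four_block_mat D2 B2 (transpose_mat B2) A2)"
    and Y1: "Y1 \<in> carrier_mat d1 d1" and X1: "X1 \<in> carrier_mat d2 d1"
    and Y1inv: "Y1inv \<in> carrier_mat d1 d1"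
    and Y1_nonsing: "Y1 * Y1inv = 1\<^sub>m d1" "Y1inv * Y1 = 1\<^sub>m d1"
    and Lam: "\<Lambda> \<in> carrier_mat d1 d1" "diagonal_mat \<Lambda>"
    and GEP: "cmat (four_block_mat A1 (transpose_mat B1) B1 D1) * (Y1 @\<^sub>r X1)
            = transpose_mat (cmat (four_block_mat D2 B2 (transpose_mat B2) A2)) * (Y1 @\<^sub>r X1) * \<Lambda>"
    and W: "W \<in> carrier_mat d1 d1"
    and W_inv: "W * (cmat A1 + transpose_mat (cmat B1) * (X1 * Y1inv)) = 1\<^sub>m d1"
               "(cmat A1 + transpose_mat (cmat B1) * (X1 * Y1inv)) * W = 1\<^sub>m d1"
  shows "let L1 = X1 * Y1inv in
         transpose_mat (cmat A2) * L1 + transpose_mat (cmat B2)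
           = (cmat B1 + cmat D1 * L1) * W * (transpose_mat (cmat D2) + cmat B2 * L1)"
proof -
  define cA1 where "cA1 = cmat A1"
  define cA2 where "cA2 = cmat A2"
  define cB1 where "cB1 = cmat B1"
  define cB2 where "cB2 = cmat B2"
  define cD1 where "cD1 = cmat D1"
  define cD2 where "cD2 = cmat D2"
  define L where "L = X1 * Y1inv"
  have A1c: "A1 \<in> carrier_mat d1 d1" and A2c: "A2 \<in> carrier_mat d2 d2"
    using A1 A2 by (auto simp: pos_def_mat_def)
  have cA1: "cA1 \<in> carrier_mat d1 d1" and cA2: "cA2 \<in> carrier_mat d2 d2"
    and cB1: "cB1 \<in> carrier_mat d2 d1" and cB2: "cB2 \<in> carrier_mat d1 d2"
    and cD1: "cD1 \<in> carrier_mat d2 d2" and cD2: "cD2 \<in> carrier_mat d1 d1"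
    using A1c A2c B1 B2 D1 D2
    by (auto simp: cA1_def cA2_def cB1_def cB2_def cD1_def cD2_def cmat_def)
  have M1: "cmat (four_block_mat A1 (transpose_mat B1) B1 D1)
      = four_block_mat cA1 (transpose_mat cB1) cB1 cD1"
    unfolding cmat_def cA1_def cB1_def cD1_def
    by (subst map_four_block_mat[OF A1c _ B1 D1], use B1 in \<open>auto simp: map_mat_transpose\<close>)
  have M2: "transpose_mat (cmat (four_block_mat D2 B2 (transpose_mat B2) A2))
      = four_block_mat (transpose_mat cD2) cB2 (transpose_mat cB2) (transpose_mat cA2)"
  proof -
    have "cmat (four_block_mat D2 B2 (transpose_mat B2) A2)
       = four_block_mat cD2 cB2 (transpose_mat cB2) cA2"
      unfolding cmat_def cA2_def cB2_def cD2_def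
      by (subst map_four_block_mat[OF D2 B2 _ A2c], use B2 in \<open>auto simp: map_mat_transpose\<close>)
    then show ?thesis
      using cD2 cB2 cA2 by (simp add: transpose_four_block_mat[OF cD2 cB2 _ cA2])
  qed
  have GEP': "(cA1 * Y1 + transpose_mat cB1 * X1) @\<^sub>r (cB1 * Y1 + cD1 * X1)
      = ((transpose_mat cD2 * Y1 + cB2 * X1) * \<Lambda>) @\<^sub>r ((transpose_mat cB2 * Y1 + transpose_mat cA2 * X1) * \<Lambda>)"
  proof -
    have "cmat (four_block_mat A1 (transpose_mat B1) B1 D1) * (Y1 @\<^sub>r X1)
       = (cA1 * Y1 + transpose_mat cB1 * X1) @\<^sub>r (cB1 * Y1 + cD1 * X1)"
      unfolding M1 by (rule block_mult[OF cA1 _ cB1 cD1 Y1 X1], use cB1 in auto)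
    moreover have "transpose_mat (cmat (four_block_mat D2 B2 (transpose_mat B2) A2)) * (Y1 @\<^sub>r X1) * \<Lambda>
       = ((transpose_mat cD2 * Y1 + cB2 * X1) * \<Lambda>) @\<^sub>r ((transpose_mat cB2 * Y1 + transpose_mat cA2 * X1) * \<Lambda>)"
      unfolding M2
      by (subst block_mult[OF _ cB2 _ _ Y1 X1], use cD2 cB2 cA2 in auto,
          rule append_rows_mult[of _ d1 d1 _ d2 _ d1], use cD2 cB2 cA2 Y1 X1 Lam in auto)
    ultimately show ?thesis using GEP by simp
  qed
  have EE: "cA1 * Y1 + transpose_mat cB1 * X1 = (transpose_mat cD2 * Y1 + cB2 * X1) * \<Lambda> \<and>
      cB1 * Y1 + cD1 * X1 = (transpose_mat cB2 * Y1 + transpose_mat cA2 * X1) * \<Lambda>"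
    by (rule append_rows_inj[of _ d1 d1 _ _ d2, OF _ _ _ _ GEP'],
        use cA1 cB1 cD1 cD2 cB2 cA2 Y1 X1 Lam in auto)
  then have E1: "cA1 * Y1 + transpose_mat cB1 * X1 = (transpose_mat cD2 * Y1 + cB2 * X1) * \<Lambda>"
   and E2: "cB1 * Y1 + cD1 * X1 = (transpose_mat cB2 * Y1 + transpose_mat cA2 * X1) * \<Lambda>"
    by auto
  define S where "S = Y1 * \<Lambda> * Y1inv"
  define P where "P = transpose_mat cD2 + cB2 * L"
  define Q where "Q = transpose_mat cB2 + transpose_mat cA2 * L"
  have F1: "cA1 + transpose_mat cB1 * L = P * S"
    unfolding P_def S_def L_def
    by (rule gen[OF cA1 _ _ cB2 X1 Y1 Y1inv Lam(1) Y1_nonsing E1], use cB1 cD2 in auto)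
  have F2: "cB1 + cD1 * L = Q * S"
    unfolding Q_def S_def L_def
    by (rule gen[OF cB1 cD1 _ _ X1 Y1 Y1inv Lam(1) Y1_nonsing E2], use cB2 cA2 in auto)
  have Lc: "L \<in> carrier_mat d2 d1" using X1 Y1inv by (simp add: L_def)
  have Pc: "P \<in> carrier_mat d1 d1" using cD2 cB2 Lc by (simp add: P_def)
  have Qc: "Q \<in> carrier_mat d2 d1" using cA2 cB2 Lc by (simp add: Q_def)
  have Sc: "S \<in> carrier_mat d1 d1" using Y1 Y1inv Lam by (simp add: S_def)
  have "(P * S) * W = 1\<^sub>m d1" using W_inv(2) F1 by (simp add: cA1_def cB1_def L_def)
  then have "P * (S * W) = 1\<^sub>m d1" using Pc Sc W by (simp add: assoc_mult_mat)
  then have SWP: "(S * W) * P = 1\<^sub>m d1"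
    using mat_mult_left_right_inverse[OF Pc mult_carrier_mat[OF Sc W]] by blast
  have "(cB1 + cD1 * L) * W * P = Q * S * W * P" using F2 by simp
  also have "\<dots> = Q * ((S * W) * P)"
  proof -
    have "Q * S * W = Q * (S * W)" using Qc Sc W by (simp add: assoc_mult_mat)
    then have "Q * S * W * P = Q * (S * W) * P" by simp
    also have "\<dots> = Q * ((S * W) * P)" using Qc Sc W Pc by (intro assoc_mult_mat) auto
    finally show ?thesis .
  qed
  also have "\<dots> = Q" using SWP Qc by simp
  finally have R: "(cB1 + cD1 * L) * W * P = Q" .
  have "transpose_mat cA2 * L + transpose_mat cB2 = Q"
    unfolding Q_def using cA2 cB2 Lc by (intro comm_add_mat) auto
  then show ?thesis
    using R unfolding Let_def L_def P_def cA1_def cA2_def cB1_def cB2_def cD1_def cD2_def by simp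
qed

end
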